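(* Let $0\le\beta<1$, let $C\in\mathbb{R}^{n\times n}$ be symmetric with $\|C\|=1$ and $\gamma\in\mathbb{R}$. Let $P^{(1)},\dots,P^{(K)}$ be real symmetric $n\times n$ matrices, each of one of the following forms: $\gamma\mathbb{1}-C$; $S-\frac{\operatorname{tr}S}{n}\mathbb{1}$ with $S$ diagonal, $S_{ii}=\operatorname{sgn}(\rho_{ii}-1/n)$ for some $\rho$; or $D/\|D\|$ with $D=\operatorname{diag}(\rho)-\mathbb{1}/n\neq 0$ for some $\rho$. Let $\Delta H^{(0)}=0$ and $\Delta H^{(k)}=P^{(k)}+\beta\Delta H^{(k-1)}$ for $k=1,\dots,K$ (the HU update matrices with momentum, with step lengths $\lambda_k=\frac{(1-\beta)^2}{2}\operatorname{tr}(\rho_{H^{(k-1)}}\Delta H^{(k)})$). Then $$\inf_{c\in\mathbb{R}}\|\Delta H^{(K)}-c\mathbb{1}\|\le\frac{1}{1-\beta}.$$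
   Context: $\|\cdot\|$ is the operator norm, $\operatorname{diag}(\rho)$ the diagonal matrix with the diagonal entries of $\rho$, $\operatorname{sgn}(0)=0$, and $\rho_H=e^{-H}/\operatorname{tr}e^{-H}$. In the HU routine with momentum, the update is $\Delta H^{(k)}=P^{(k)}+\frac{\beta}{\lambda_{k-1}}M^{(k-1)}$ with $M^{(k-1)}=\lambda_{k-1}\Delta H^{(k-1)}$, i.e. the recursion in the claim. *)

theory Defs
  imports "HOL-Analysis.Analysis"
begin

definition opnorm :: "real^'n^'n \<Rightarrow> real" where
  "opnorm A = onorm (\<lambda>x. A *v x)"

definition diag_part :: "real^'n^'n \<Rightarrow> real^'n^'n" where
  "diag_part \<rho> = (\<chi> i j. if i = j then \<rho> $ i $ i else 0)"

definition form_shift :: "real^'n^'n \<Rightarrow> real \<Rightarrow> real^'n^'n \<Rightarrow> bool" where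
  "form_shift C \<gamma> P \<longleftrightarrow> P = \<gamma> *\<^sub>R mat 1 - C"

definition form_sign :: "real^'n^'n \<Rightarrow> bool" where
  "form_sign P \<longleftrightarrow> (\<exists>\<rho> :: real^'n^'n.
     let S = (\<chi> i j. if i = j then sgn (\<rho> $ i $ i - 1 / real CARD('n)) else 0) :: real^'n^'n
     in P = S - (trace S / real CARD('n)) *\<^sub>R mat 1)"

definition form_diag :: "real^'n^'n \<Rightarrow> bool" where
  "form_diag P \<longleftrightarrow> (\<exists>\<rho> :: real^'n^'n.
     let D = diag_part \<rho> - (1 / real CARD('n)) *\<^sub>R mat 1
     in D \<noteq> 0 \<and> P = (1 / opnorm D) *\<^sub>R D)"

end

theory Submission
  imports Defs
begin

lemma opnorm_nonneg: "0 \<le> opnorm (A::real^'n^'n)"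
  unfolding opnorm_def by (rule onorm_pos_le) simp

lemma opnorm_add: "opnorm ((A::real^'n^'n) + B) \<le> opnorm A + opnorm B"
  unfolding opnorm_def matrix_vector_mult_add_rdistrib
  by (rule onorm_triangle) simp_all

lemma opnorm_scale: "opnorm (r *\<^sub>R (A::real^'n^'n)) = \<bar>r\<bar> * opnorm A"
proof -
  have "(\<lambda>x. (r *\<^sub>R A) *v x) = (\<lambda>x. r *\<^sub>R (A *v x))"
    by (simp add: scaleR_matrix_vector_assoc)
  thus ?thesis unfolding opnorm_def by (simp add: onorm_scaleR)
qed

lemma opnorm_neg: "opnorm (- (A::real^'n^'n)) = opnorm A"
  using opnorm_scale[of "-1" A] by simp

lemma opnorm_eq0: "opnorm (A::real^'n^'n) = 0 \<Longrightarrow> A = 0"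
  unfolding opnorm_def by (subst (asm) onorm_eq_0) (auto simp: matrix_eq)

lemma opnorm_diag:
  assumes "\<And>i. \<bar>s i\<bar> \<le> 1"
  shows "opnorm ((\<chi> i j. if i = j then s i else 0) :: real^'n^'n) \<le> 1"
  unfolding opnorm_def
proof (rule onorm_le)
  fix x :: "real^'n"
  have e: "(\<chi> i j. if i = j then s i else 0) *v x = (\<chi> i. s i * x $ i)"
  proof -
    have "(\<Sum>j\<in>UNIV. (if i = j then s i else 0) * x $ j) = s i * x $ i" for i
    proof -
      have "(\<Sum>j\<in>UNIV. (if i = j then s i else 0) * x $ j) = (\<Sum>j\<in>UNIV. if i = j then s i * x $ j else 0)"
        by (rule sum.cong) auto
      also have "\<dots> = s i * x $ i" by simp
      finally show ?thesis .
    qed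
    thus ?thesis unfolding matrix_vector_mult_def vec_eq_iff by simp
  qed
  have "norm (\<chi> i. s i * x $ i) \<le> norm x"
    unfolding norm_le inner_vec_def
  proof (rule sum_mono)
    fix i
    have "(s i)^2 \<le> 1" using assms[of i] by (simp add: abs_square_le_1)
    hence "(s i)^2 * (x$i)^2 \<le> 1 * (x$i)^2" by (rule mult_right_mono) simp
    thus "(\<chi> i. s i * x $ i) $ i \<bullet> (\<chi> i. s i * x $ i) $ i \<le> x $ i \<bullet> x $ i"
      by (simp add: power2_eq_square algebra_simps)
  qed
  thus "norm ((\<chi> i j. if i = j then s i else 0) *v x) \<le> 1 * norm x" by (simp add: e)
qed

lemma P_bound:
  assumes "opnorm C = 1"
    and "form_shift C \<gamma> P \<or> form_sign P \<or> form_diag (P::real^'n^'n)"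
  shows "\<exists>c. opnorm (P - c *\<^sub>R mat 1) \<le> 1"
  using assms(2)
proof (elim disjE)
  assume "form_shift C \<gamma> P"
  hence "P - \<gamma> *\<^sub>R mat 1 = - C" by (simp add: form_shift_def)
  hence "opnorm (P - \<gamma> *\<^sub>R mat 1) \<le> 1" using assms(1) opnorm_neg[of C] by simp
  thus ?thesis by blast
next
  assume "form_sign P"
  then obtain \<rho> :: "real^'n^'n" where
    P0: "let S = (\<chi> i j. if i = j then sgn (\<rho> $ i $ i - 1 / real CARD('n)) else 0) :: real^'n^'n
     in P = S - (trace S / real CARD('n)) *\<^sub>R mat 1"
    unfolding form_sign_def by blast
  define S :: "real^'n^'n" where "S = (\<chi> i j. if i = j then sgn (\<rho> $ i $ i - 1 / real CARD('n)) else 0)"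
  define t where "t = trace S / real CARD('n)"
  have P: "P = S - t *\<^sub>R mat 1" using P0 unfolding S_def t_def Let_def by simp
  have "opnorm S \<le> 1" unfolding S_def
    by (rule opnorm_diag) (simp add: abs_sgn_eq)
  moreover have "P - (- t) *\<^sub>R mat 1 = S" unfolding P by simp
  ultimately show ?thesis by metis
next
  assume "form_diag P"
  then obtain \<rho> :: "real^'n^'n" where D0: "let D = diag_part \<rho> - (1 / real CARD('n)) *\<^sub>R mat 1
     in D \<noteq> 0 \<and> P = (1 / opnorm D) *\<^sub>R D" unfolding form_diag_def by blast
  define D where "D = diag_part \<rho> - (1 / real CARD('n)) *\<^sub>R mat 1"
  have D: "D \<noteq> 0" "P = (1 / opnorm D) *\<^sub>R D" using D0 unfolding D_def[symmetric] Let_def by auto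
  have "opnorm D \<noteq> 0" using D(1) opnorm_eq0 by blast
  hence "opnorm (P - 0 *\<^sub>R mat 1) = 1" using opnorm_nonneg[of D]
    by (simp add: D(2) opnorm_scale)
  thus ?thesis by (metis order_refl)
qed

theorem lemma3:
  fixes C :: "real^'n^'n" and \<gamma> \<beta> :: real and K :: nat
    and P dH :: "nat \<Rightarrow> real^'n^'n"
  assumes "0 \<le> \<beta>" and "\<beta> < 1"
    and "transpose C = C" and "opnorm C = 1"
    and "\<And>k. k \<in> {1..K} \<Longrightarrow> transpose (P k) = P k"
    and "\<And>k. k \<in> {1..K} \<Longrightarrow> form_shift C \<gamma> (P k) \<or> form_sign (P k) \<or> form_diag (P k)"
    and "dH 0 = 0"
    and "\<And>k. k \<in> {1..K} \<Longrightarrow> dH k = P k + \<beta> *\<^sub>R dH (k - 1)"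
  shows "(INF c::real. opnorm (dH K - c *\<^sub>R mat 1)) \<le> 1 / (1 - \<beta>)"
proof -
  have main: "k \<le> K \<Longrightarrow> \<exists>c. opnorm (dH k - c *\<^sub>R mat 1) \<le> (\<Sum>j<k. \<beta>^j)" for k
  proof (induction k)
    case 0
    show ?case using assms(7) by (intro exI[of _ 0]) (simp add: opnorm_def onorm_zero)
  next
    case (Suc k)
    then obtain c where c: "opnorm (dH k - c *\<^sub>R mat 1) \<le> (\<Sum>j<k. \<beta>^j)" by auto
    have kk: "Suc k \<in> {1..K}" using Suc.prems by simp
    obtain c' where c': "opnorm (P (Suc k) - c' *\<^sub>R mat 1) \<le> 1"
      using P_bound[OF assms(4) assms(6)[OF kk]] by blast
    have eq: "dH (Suc k) - (c' + \<beta> * c) *\<^sub>R mat 1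
        = (P (Suc k) - c' *\<^sub>R mat 1) + \<beta> *\<^sub>R (dH k - c *\<^sub>R mat 1)"
      using assms(8)[OF kk] by (simp add: algebra_simps)
    have "opnorm (dH (Suc k) - (c' + \<beta> * c) *\<^sub>R mat 1)
        \<le> opnorm (P (Suc k) - c' *\<^sub>R mat 1) + \<beta> * opnorm (dH k - c *\<^sub>R mat 1)"
      unfolding eq using opnorm_add opnorm_scale assms(1) by (metis abs_of_nonneg)
    also have "\<dots> \<le> 1 + \<beta> * (\<Sum>j<k. \<beta>^j)"
      using c c' assms(1) by (intro add_mono mult_left_mono) auto
    also have "\<dots> = (\<Sum>j<Suc k. \<beta>^j)"
      unfolding sum.lessThan_Suc_shift by (simp add: sum_distrib_left)
    finally show ?case by blast
  qed
  obtain c where c: "opnorm (dH K - c *\<^sub>R mat 1) \<le> (\<Sum>j<K. \<beta>^j)" using main by blast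
  have "(\<Sum>j<K. \<beta>^j) = (1 - \<beta>^K) / (1 - \<beta>)" using assms(2) by (simp add: sum_gp_strict)
  also have "\<dots> \<le> 1 / (1 - \<beta>)" using assms(1,2)
    by (intro divide_right_mono) auto
  finally have "opnorm (dH K - c *\<^sub>R mat 1) \<le> 1 / (1 - \<beta>)" using c by linarith
  thus ?thesis
    by (intro cINF_lower2[where x=c]) (auto intro: bdd_belowI[where m=0] opnorm_nonneg)
qed

end
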